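(* Let $A_0\subseteq A$ be a finite extension of $k$-algebras, i.e. $A$ is finitely generated both as a left and as a right $A_0$-module. Then a two-sided ideal $I$ of $A$ has finite $k$-codimension in $A$ if and only if there exists a two-sided ideal $I_0$ of $A_0$ of finite $k$-codimension in $A_0$ such that $I_0\subseteq I$.
   Context: $k$ is a field; algebras are unital associative $k$-algebras. *)

theory Defs
  imports Main "HOL.Vector_Spaces"
begin

definition k_algebra :: "('k::field \<Rightarrow> 'a::ring_1 \<Rightarrow> 'a) \<Rightarrow> bool" where
  "k_algebra scale \<longleftrightarrow> vector_space scale \<and>
     (\<forall>c x y. scale c (x * y) = scale c x * y \<and> scale c (x * y) = x * scale c y)"

definition subalgebra :: "('k::field \<Rightarrow> 'a::ring_1 \<Rightarrow> 'a) \<Rightarrow> 'a set \<Rightarrow> bool" where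
  "subalgebra scale A0 \<longleftrightarrow> 1 \<in> A0 \<and> 0 \<in> A0 \<and>
     (\<forall>x\<in>A0. \<forall>y\<in>A0. x + y \<in> A0 \<and> x * y \<in> A0) \<and>
     (\<forall>c. \<forall>x\<in>A0. scale c x \<in> A0)"

definition fin_gen_left :: "'a::ring_1 set \<Rightarrow> bool" where
  "fin_gen_left A0 \<longleftrightarrow> (\<exists>G. finite G \<and>
     (\<forall>x. \<exists>c. (\<forall>g\<in>G. c g \<in> A0) \<and> x = (\<Sum>g\<in>G. c g * g)))"

definition fin_gen_right :: "'a::ring_1 set \<Rightarrow> bool" where
  "fin_gen_right A0 \<longleftrightarrow> (\<exists>G. finite G \<and>
     (\<forall>x. \<exists>c. (\<forall>g\<in>G. c g \<in> A0) \<and> x = (\<Sum>g\<in>G. g * c g)))"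

text \<open>Two-sided ideal I of the subalgebra B (B = UNIV gives ideals of the whole algebra):
a k-subspace of B closed under multiplication by elements of B on both sides.\<close>
definition two_sided_ideal :: "('k::field \<Rightarrow> 'a::ring_1 \<Rightarrow> 'a) \<Rightarrow> 'a set \<Rightarrow> 'a set \<Rightarrow> bool" where
  "two_sided_ideal scale B I \<longleftrightarrow> I \<subseteq> B \<and> 0 \<in> I \<and>
     (\<forall>x\<in>I. \<forall>y\<in>I. x + y \<in> I) \<and> (\<forall>c. \<forall>x\<in>I. scale c x \<in> I) \<and>
     (\<forall>a\<in>B. \<forall>x\<in>I. a * x \<in> I \<and> x * a \<in> I)"

text \<open>I has finite k-codimension in B, i.e. B/I is a finite-dimensional k-vector space:
B is spanned modulo I by finitely many elements of B.\<close>
definition finite_codim :: "('k::field \<Rightarrow> 'a::ring_1 \<Rightarrow> 'a) \<Rightarrow> 'a set \<Rightarrow> 'a set \<Rightarrow> bool" where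
  "finite_codim scale B I \<longleftrightarrow> (\<exists>F. finite F \<and> F \<subseteq> B \<and>
     (\<forall>b\<in>B. \<exists>u\<in>module.span scale F. \<exists>i\<in>I. b = u + i))"

end

theory Submission
  imports Defs
begin

theorem lemma4p1:
  fixes scale :: "'k::field \<Rightarrow> 'a::ring_1 \<Rightarrow> 'a"
    and A0 :: "'a set" and I :: "'a set"
  assumes "k_algebra scale"
    and "subalgebra scale A0"
    and "fin_gen_left A0" and "fin_gen_right A0"
    and "two_sided_ideal scale UNIV I"
  shows "finite_codim scale UNIV I \<longleftrightarrow>
    (\<exists>I0. two_sided_ideal scale A0 I0 \<and> finite_codim scale A0 I0 \<and> I0 \<subseteq> I)"
proof -
  interpret V: vector_space scale using assms(1) by (simp add: k_algebra_def)
  have smul: "\<And>c x y. scale c (x * y) = scale c x * y" using assms(1) by (simp add: k_algebra_def)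
  have Isub: "V.subspace I" using assms(5) by (simp add: two_sided_ideal_def V.subspace_def)
  have Iid: "\<And>a x. x \<in> I \<Longrightarrow> a * x \<in> I \<and> x * a \<in> I" using assms(5) by (simp add: two_sided_ideal_def)
  have Asub: "V.subspace A0" using assms(2) by (simp add: subalgebra_def V.subspace_def)
  have Amul: "\<And>x y. x \<in> A0 \<Longrightarrow> y \<in> A0 \<Longrightarrow> x * y \<in> A0" using assms(2) by (simp add: subalgebra_def)
  show ?thesis
  proof
    assume "finite_codim scale UNIV I"
    then obtain F where F: "finite F" "\<And>b. \<exists>u\<in>V.span F. \<exists>i\<in>I. b = u + i"
      by (auto simp: finite_codim_def)
    define W where "W = {s \<in> V.span F. \<exists>v\<in>A0. v - s \<in> I}"
    obtain B where B: "B \<subseteq> W" "V.independent B" "W \<subseteq> V.span B"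
      using V.maximal_independent_subset by blast
    have finB: "finite B" using V.independent_span_bound[OF F(1) B(2)] B(1) W_def by blast
    have "\<forall>b\<in>B. \<exists>v\<in>A0. v - b \<in> I" using B(1) W_def by blast
    then obtain vb where vb: "\<And>b. b \<in> B \<Longrightarrow> vb b \<in> A0 \<and> vb b - b \<in> I" by metis
    define F0 where "F0 = vb ` B"
    have F0A: "F0 \<subseteq> A0" using vb F0_def by blast
    have spF0: "V.span F0 \<subseteq> A0" using V.span_minimal[OF F0A Asub] .
    have key: "\<exists>u\<in>V.span F0. u - s \<in> I" if "s \<in> V.span B" for s
      using that
    proof (induction rule: V.span_induct_alt)
      case base
      then show ?case using V.span_zero V.subspace_0[OF Isub] by force
    next
      case (step c x y)
      then obtain u where u: "u \<in> V.span F0" "u - y \<in> I" by blast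
      have "scale c (vb x) + u \<in> V.span F0"
        proof (rule V.span_add[OF V.span_scale[OF V.span_base] u(1)])
        show "vb x \<in> F0" using step(1) F0_def by blast
      qed
      moreover have "scale c (vb x) + u - (scale c x + y) = scale c (vb x - x) + (u - y)"
        by (simp add: V.scale_right_diff_distrib algebra_simps)
      moreover have "scale c (vb x - x) + (u - y) \<in> I"
        using vb[OF step(1)] u(2) Isub by (simp add: V.subspace_def)
      ultimately show ?case by metis
    qed
    have "finite_codim scale A0 (I \<inter> A0)"
      unfolding finite_codim_def
    proof (intro exI[of _ F0] conjI ballI)
      show "finite F0" using finB F0_def by simp
      show "F0 \<subseteq> A0" by (rule F0A)
      fix v assume v: "v \<in> A0"
      obtain s i where si: "s \<in> V.span F" "i \<in> I" "v = s + i" using F(2) by blast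
      have "v - s \<in> I" using si by simp
      then have "s \<in> W" using si(1) v W_def by blast
      then obtain u where u: "u \<in> V.span F0" "u - s \<in> I" using key B(3) by blast
      have "v - u \<in> I" using V.subspace_diff[OF Isub si(2) u(2)] si(3) by (simp add: algebra_simps)
      moreover have "v - u \<in> A0" using V.subspace_diff[OF Asub v] u(1) spF0 by blast
      ultimately show "\<exists>u\<in>V.span F0. \<exists>i\<in>I \<inter> A0. v = u + i" using u(1)
        by (intro bexI[of _ u] bexI[of _ "v - u"]) auto
    qed
    moreover have "two_sided_ideal scale A0 (I \<inter> A0)"
      using assms(5) Asub Amul Iid by (auto simp: two_sided_ideal_def V.subspace_def)
    ultimately show "\<exists>I0. two_sided_ideal scale A0 I0 \<and> finite_codim scale A0 I0 \<and> I0 \<subseteq> I"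
      by blast
  next
    assume "\<exists>I0. two_sided_ideal scale A0 I0 \<and> finite_codim scale A0 I0 \<and> I0 \<subseteq> I"
    then obtain I0 F where I0: "I0 \<subseteq> I" and F: "finite F" "F \<subseteq> A0"
      "\<And>b. b \<in> A0 \<Longrightarrow> \<exists>u\<in>V.span F. \<exists>i\<in>I0. b = u + i"
      by (auto simp: finite_codim_def)
    obtain G where G: "finite G" "\<And>x. \<exists>c. (\<forall>g\<in>G. c g \<in> A0) \<and> x = (\<Sum>g\<in>G. c g * g)"
      using assms(3) by (auto simp: fin_gen_left_def)
    define H where "H = (\<lambda>(f,g). f * g) ` (F \<times> G)"
    have mulspan: "u * g \<in> V.span H" if "u \<in> V.span F" "g \<in> G" for u g
      using that(1)
    proof (induction rule: V.span_induct_alt)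
      case base
      then show ?case by (simp add: V.span_zero)
    next
      case (step c x y)
      have "x * g \<in> H" using step(1) that(2) H_def by force
      then have "scale c (x * g) + y * g \<in> V.span H"
        using step(2) by (rule V.span_add[OF V.span_scale[OF V.span_base]])
      then show ?case by (simp add: smul distrib_right)
    qed
    have each: "\<exists>u\<in>V.span H. \<exists>i\<in>I. a * g = u + i" if ag: "a \<in> A0" "g \<in> G" for a g
    proof -
      obtain u i where ui: "u \<in> V.span F" "i \<in> I0" "a = u + i" using F(3)[OF ag(1)] by blast
      have "i * g \<in> I" using Iid ui(2) I0 by blast
      then show ?thesis using mulspan[OF ui(1) ag(2)] ui(3) by (auto simp: distrib_right)
    qed
    have sumlem: "\<And>G'. finite G' \<Longrightarrow> G' \<subseteq> G \<Longrightarrow> (\<forall>g\<in>G'. c g \<in> A0) \<Longrightarrow>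
        \<exists>u\<in>V.span H. \<exists>i\<in>I. (\<Sum>g\<in>G'. c g * g) = u + i" for c
    proof -
      fix G' assume "finite G'" "G' \<subseteq> G" "\<forall>g\<in>G'. c g \<in> A0"
      then show "\<exists>u\<in>V.span H. \<exists>i\<in>I. (\<Sum>g\<in>G'. c g * g) = u + i"
      proof (induction G' rule: finite_induct)
        case empty
        then show ?case using V.span_zero V.subspace_0[OF Isub] by force
      next
        case (insert x G')
        then obtain u i where ui: "u \<in> V.span H" "i \<in> I" "(\<Sum>g\<in>G'. c g * g) = u + i" by auto
        obtain u' i' where ui': "u' \<in> V.span H" "i' \<in> I" "c x * x = u' + i'"
          using each insert by blast
        have "u' + u \<in> V.span H" using ui ui' V.span_add by blast
        moreover have "i' + i \<in> I" using ui ui' Isub by (simp add: V.subspace_def)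
        moreover have "(\<Sum>g\<in>insert x G'. c g * g) = (u' + u) + (i' + i)"
          using insert(1,2) ui(3) ui'(3) by (simp add: algebra_simps)
        ultimately show ?case by blast
      qed
    qed
    show "finite_codim scale UNIV I"
      unfolding finite_codim_def
    proof (intro exI[of _ H] conjI ballI)
      show "finite H" using F(1) G(1) H_def by simp
      show "H \<subseteq> UNIV" by simp
      fix x :: 'a
      obtain c where "\<forall>g\<in>G. c g \<in> A0" "x = (\<Sum>g\<in>G. c g * g)" using G(2) by blast
      then show "\<exists>u\<in>V.span H. \<exists>i\<in>I. x = u + i" using sumlem[OF G(1)] by blast
    qed
  qed
qed

end
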